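(* With notation as in the context (type $E_7$), let $s\in\{1,3,4,5,6,7\}$ and let $\beta\neq\beta'$ be elements of $\Delta_s^+$. Then $(f(\beta)|f(\beta'))=0$ if and only if $f(\beta)$ and $f(\beta')$ agree in exactly one of their three coordinates. In particular, $\langle\beta,\beta'\rangle=0$ if and only if $f(\beta)$ and $f(\beta')$ agree in exactly one coordinate.
   Context: Let $F=\{0,1,2,3\}$ be the group $\mathbb{Z}/2\times\mathbb{Z}/2$ with operation $\oplus$ (binary addition without carry) and symplectic form $(a|a')=0$ if $a=0$, $a'=0$ or $a=a'$, and $1$ otherwise. Let $V=F^3$ (elements written $abc$), with coordinatewise $\oplus$ and form $(abc|a'b'c')=(a|a')+(b|b')+(c|c')\in\mathbb{Z}/2$. Let $\Delta$ be the $E_7$ root system with simple roots $\alpha_1,\dots,\alpha_7$, $\langle\alpha_i,\alpha_i\rangle=2$, $\langle\alpha_i,\alpha_j\rangle=-1$ for $\{i,j\}\in\{\{1,3\},\{3,4\},\{4,5\},\{5,6\},\{6,7\},\{2,4\}\}$, $0$ otherwise; $\Lambda=\bigoplus\mathbb{Z}\alpha_i$, $\Delta^+$ the positive roots. Let $f:\Lambda\to V$ be the homomorphism with $f(\alpha_1)=100$, $f(\alpha_2)=030$, $f(\alpha_3)=300$, $f(\alpha_4)=111$, $f(\alpha_5)=003$, $f(\alpha_6)=001$, $f(\alpha_7)=033$. For $\beta=\sum\beta^i\alpha_i\in\Delta^+$ let $m(\beta)=\max\{i:\beta^i\ne0\}$. The strata are $\Delta_1^+=\{\alpha_1\}$,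 $\Delta_3^+=\{\beta\in\Delta^+: m(\beta)\in\{2,3\}\}$, and $\Delta_s^+=\{\beta\in\Delta^+: m(\beta)=s\}$ for $s=4,5,6,7$. *)

theory Defs
  imports Main
begin

text \<open>Elements of F are the naturals 0,1,2,3; the group law is bitwise xor.
  Elements of V are lists of length 3 over F.\<close>

definition formF :: "nat \<Rightarrow> nat \<Rightarrow> nat" where
  "formF a a' = (if a = 0 \<or> a' = 0 \<or> a = a' then 0 else 1)"

definition addV :: "nat list \<Rightarrow> nat list \<Rightarrow> nat list" where
  "addV v w = map2 xor v w"

definition zeroV :: "nat list" where
  "zeroV = [0, 0, 0]"

definition formV :: "nat list \<Rightarrow> nat list \<Rightarrow> nat" where
  "formV v w = (\<Sum>k<3. formF (v ! k) (w ! k)) mod 2"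

definition agree_exactly_one :: "nat list \<Rightarrow> nat list \<Rightarrow> bool" where
  "agree_exactly_one v w \<longleftrightarrow> card {k. k < 3 \<and> v ! k = w ! k} = 1"

text \<open>Elements of \<Lambda> are coefficient vectors \<beta> :: nat \<Rightarrow> int, \<beta> i = \<beta>^i,
  supported on {1..7}.\<close>

definition e7_edge :: "nat \<Rightarrow> nat \<Rightarrow> bool" where
  "e7_edge i j \<longleftrightarrow> {i, j} \<in> {{1,3},{3,4},{4,5},{5,6},{6,7},{2,4}}"

definition cartan :: "nat \<Rightarrow> nat \<Rightarrow> int" where
  "cartan i j = (if i = j then 2 else if e7_edge i j then -1 else 0)"

definition bil :: "(nat \<Rightarrow> int) \<Rightarrow> (nat \<Rightarrow> int) \<Rightarrow> int" where
  "bil \<beta> \<gamma> = (\<Sum>i\<in>{1..7}. \<Sum>j\<in>{1..7}. \<beta> i * \<gamma> j * cartan i j)"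

definition simple_root :: "nat \<Rightarrow> (nat \<Rightarrow> int)" where
  "simple_root i = (\<lambda>j. if j = i then 1 else 0)"

definition refl :: "nat \<Rightarrow> (nat \<Rightarrow> int) \<Rightarrow> (nat \<Rightarrow> int)" where
  "refl i \<beta> = (\<lambda>j. \<beta> j - bil \<beta> (simple_root i) * simple_root i j)"

inductive_set roots :: "(nat \<Rightarrow> int) set" where
  simple: "i \<in> {1..7} \<Longrightarrow> simple_root i \<in> roots"
| reflect: "\<beta> \<in> roots \<Longrightarrow> i \<in> {1..7} \<Longrightarrow> refl i \<beta> \<in> roots"

definition pos_roots :: "(nat \<Rightarrow> int) set" where
  "pos_roots = {\<beta> \<in> roots. \<forall>i. \<beta> i \<ge> 0}"

definition f_simple :: "nat \<Rightarrow> nat list" where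
  "f_simple i = (if i = 1 then [1,0,0] else if i = 2 then [0,3,0] else
                 if i = 3 then [3,0,0] else if i = 4 then [1,1,1] else
                 if i = 5 then [0,0,3] else if i = 6 then [0,0,1] else
                 if i = 7 then [0,3,3] else zeroV)"

text \<open>Since V has exponent 2, f(\<Sum> \<beta>^i \<alpha>_i) is the sum of the f(\<alpha>_i) with \<beta>^i odd.\<close>
definition fmap :: "(nat \<Rightarrow> int) \<Rightarrow> nat list" where
  "fmap \<beta> = foldr (\<lambda>i acc. if odd (\<beta> i) then addV (f_simple i) acc else acc) [1..<8] zeroV"

definition mdeg :: "(nat \<Rightarrow> int) \<Rightarrow> nat" where
  "mdeg \<beta> = Max {i \<in> {1..7}. \<beta> i \<noteq> 0}"

definition stratum :: "nat \<Rightarrow> (nat \<Rightarrow> int) set" where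
  "stratum s = (if s = 1 then {simple_root 1}
                else if s = 3 then {\<beta> \<in> pos_roots. mdeg \<beta> \<in> {2, 3}}
                else {\<beta> \<in> pos_roots. mdeg \<beta> = s})"

end

theory Submission
  imports Defs
begin

definition vec :: "int list \<Rightarrow> nat \<Rightarrow> int" where
  "vec l = (\<lambda>j. if 1 \<le> j \<and> j \<le> 7 then l ! (j - 1) else 0)"

definition Rlist :: "int list list" where
  "Rlist = [[-2,-2,-3,-4,-3,-2,-1],
 [-1,-2,-3,-4,-3,-2,-1],
 [-1,-2,-2,-4,-3,-2,-1],
 [-1,-2,-2,-3,-3,-2,-1],
 [-1,-2,-2,-3,-2,-2,-1],
 [-1,-2,-2,-3,-2,-1,-1],
 [-1,-2,-2,-3,-2,-1,0],
 [-1,-1,-2,-3,-3,-2,-1],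
 [-1,-1,-2,-3,-2,-2,-1],
 [-1,-1,-2,-3,-2,-1,-1],
 [-1,-1,-2,-3,-2,-1,0],
 [-1,-1,-2,-2,-2,-2,-1],
 [-1,-1,-2,-2,-2,-1,-1],
 [-1,-1,-2,-2,-2,-1,0],
 [-1,-1,-2,-2,-1,-1,-1],
 [-1,-1,-2,-2,-1,-1,0],
 [-1,-1,-2,-2,-1,0,0],
 [-1,-1,-1,-2,-2,-2,-1],
 [-1,-1,-1,-2,-2,-1,-1],
 [-1,-1,-1,-2,-2,-1,0],
 [-1,-1,-1,-2,-1,-1,-1],
 [-1,-1,-1,-2,-1,-1,0],
 [-1,-1,-1,-2,-1,0,0],
 [-1,-1,-1,-1,-1,-1,-1],
 [-1,-1,-1,-1,-1,-1,0],
 [-1,-1,-1,-1,-1,0,0],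
 [-1,-1,-1,-1,0,0,0],
 [-1,0,-1,-1,-1,-1,-1],
 [-1,0,-1,-1,-1,-1,0],
 [-1,0,-1,-1,-1,0,0],
 [-1,0,-1,-1,0,0,0],
 [-1,0,-1,0,0,0,0],
 [-1,0,0,0,0,0,0],
 [0,-1,-1,-2,-2,-2,-1],
 [0,-1,-1,-2,-2,-1,-1],
 [0,-1,-1,-2,-2,-1,0],
 [0,-1,-1,-2,-1,-1,-1],
 [0,-1,-1,-2,-1,-1,0],
 [0,-1,-1,-2,-1,0,0],
 [0,-1,-1,-1,-1,-1,-1],
 [0,-1,-1,-1,-1,-1,0],
 [0,-1,-1,-1,-1,0,0],
 [0,-1,-1,-1,0,0,0],
 [0,-1,0,-1,-1,-1,-1],
 [0,-1,0,-1,-1,-1,0],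
 [0,-1,0,-1,-1,0,0],
 [0,-1,0,-1,0,0,0],
 [0,-1,0,0,0,0,0],
 [0,0,-1,-1,-1,-1,-1],
 [0,0,-1,-1,-1,-1,0],
 [0,0,-1,-1,-1,0,0],
 [0,0,-1,-1,0,0,0],
 [0,0,-1,0,0,0,0],
 [0,0,0,-1,-1,-1,-1],
 [0,0,0,-1,-1,-1,0],
 [0,0,0,-1,-1,0,0],
 [0,0,0,-1,0,0,0],
 [0,0,0,0,-1,-1,-1],
 [0,0,0,0,-1,-1,0],
 [0,0,0,0,-1,0,0],
 [0,0,0,0,0,-1,-1],
 [0,0,0,0,0,-1,0],
 [0,0,0,0,0,0,-1],
 [0,0,0,0,0,0,1],
 [0,0,0,0,0,1,0],
 [0,0,0,0,0,1,1],
 [0,0,0,0,1,0,0],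
 [0,0,0,0,1,1,0],
 [0,0,0,0,1,1,1],
 [0,0,0,1,0,0,0],
 [0,0,0,1,1,0,0],
 [0,0,0,1,1,1,0],
 [0,0,0,1,1,1,1],
 [0,0,1,0,0,0,0],
 [0,0,1,1,0,0,0],
 [0,0,1,1,1,0,0],
 [0,0,1,1,1,1,0],
 [0,0,1,1,1,1,1],
 [0,1,0,0,0,0,0],
 [0,1,0,1,0,0,0],
 [0,1,0,1,1,0,0],
 [0,1,0,1,1,1,0],
 [0,1,0,1,1,1,1],
 [0,1,1,1,0,0,0],
 [0,1,1,1,1,0,0],
 [0,1,1,1,1,1,0],
 [0,1,1,1,1,1,1],
 [0,1,1,2,1,0,0],
 [0,1,1,2,1,1,0],
 [0,1,1,2,1,1,1],
 [0,1,1,2,2,1,0],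
 [0,1,1,2,2,1,1],
 [0,1,1,2,2,2,1],
 [1,0,0,0,0,0,0],
 [1,0,1,0,0,0,0],
 [1,0,1,1,0,0,0],
 [1,0,1,1,1,0,0],
 [1,0,1,1,1,1,0],
 [1,0,1,1,1,1,1],
 [1,1,1,1,0,0,0],
 [1,1,1,1,1,0,0],
 [1,1,1,1,1,1,0],
 [1,1,1,1,1,1,1],
 [1,1,1,2,1,0,0],
 [1,1,1,2,1,1,0],
 [1,1,1,2,1,1,1],
 [1,1,1,2,2,1,0],
 [1,1,1,2,2,1,1],
 [1,1,1,2,2,2,1],
 [1,1,2,2,1,0,0],
 [1,1,2,2,1,1,0],
 [1,1,2,2,1,1,1],
 [1,1,2,2,2,1,0],
 [1,1,2,2,2,1,1],
 [1,1,2,2,2,2,1],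
 [1,1,2,3,2,1,0],
 [1,1,2,3,2,1,1],
 [1,1,2,3,2,2,1],
 [1,1,2,3,3,2,1],
 [1,2,2,3,2,1,0],
 [1,2,2,3,2,1,1],
 [1,2,2,3,2,2,1],
 [1,2,2,3,3,2,1],
 [1,2,2,4,3,2,1],
 [1,2,3,4,3,2,1],
 [2,2,3,4,3,2,1]]"

definition simpleL :: "nat \<Rightarrow> int list" where
  "simpleL i = map (\<lambda>j. if j = i then 1 else 0) [1..<8]"

definition reflL :: "nat \<Rightarrow> int list \<Rightarrow> int list" where
  "reflL i l = map (\<lambda>j. vec l j - bil (vec l) (vec (simpleL i)) * (if j = i then 1 else 0)) [1..<8]"

lemma simple_vec: "i \<in> {1..7} \<Longrightarrow> simple_root i = vec (simpleL i)"
  by (auto simp: simple_root_def vec_def simpleL_def fun_eq_iff nth_append)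

lemma refl_vec: "i \<in> {1..7} \<Longrightarrow> refl i (vec l) = vec (reflL i l)"
  apply (simp add: refl_def simple_vec fun_eq_iff)
  apply (auto simp: vec_def reflL_def simpleL_def)
  done

definition bilL :: "int list \<Rightarrow> int list \<Rightarrow> int" where
  "bilL a b = 2 * a!0 * b!0 + 2 * a!1 * b!1 + 2 * a!2 * b!2 + 2 * a!3 * b!3 + 2 * a!4 * b!4 + 2 * a!5 * b!5 + 2 * a!6 * b!6 - (a!0 * b!2 + a!2 * b!0 + a!2 * b!3 + a!3 * b!2 + a!3 * b!4 + a!4 * b!3 + a!4 * b!5 + a!5 * b!4 + a!5 * b!6 + a!6 * b!5 + a!1 * b!3 + a!3 * b!1)"

lemma set17: "{1..7::nat} = {1,2,3,4,5,6,7}" by auto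

lemma bil_vec: "bil (vec a) (vec b) = bilL a b"
  unfolding bil_def set17
  apply (simp add: cartan_def e7_edge_def doubleton_eq_iff)
  apply (simp add: vec_def bilL_def algebra_simps)
  done

fun bilP :: "int list \<Rightarrow> int list \<Rightarrow> int" where
  "bilP [a1, a2, a3, a4, a5, a6, a7] [b1, b2, b3, b4, b5, b6, b7] = 2 * a1 * b1 + 2 * a2 * b2 + 2 * a3 * b3 + 2 * a4 * b4 + 2 * a5 * b5 + 2 * a6 * b6 + 2 * a7 * b7 - (a1 * b3 + a3 * b1 + a3 * b4 + a4 * b3 + a4 * b5 + a5 * b4 + a5 * b6 + a6 * b5 + a6 * b7 + a7 * b6 + a2 * b4 + a4 * b2)"
| "bilP _ _ = 0"

fun reflP :: "nat \<Rightarrow> int list \<Rightarrow> int list" where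
  "reflP i [a1, a2, a3, a4, a5, a6, a7] = (if i = 1 then [(a3 - a1), a2, a3, a4, a5, a6, a7] else if i = 2 then [a1, (a4 - a2), a3, a4, a5, a6, a7] else if i = 3 then [a1, a2, (a1 + a4 - a3), a4, a5, a6, a7] else if i = 4 then [a1, a2, a3, (a3 + a5 + a2 - a4), a5, a6, a7] else if i = 5 then [a1, a2, a3, a4, (a4 + a6 - a5), a6, a7] else if i = 6 then [a1, a2, a3, a4, a5, (a5 + a7 - a6), a7] else if i = 7 then [a1, a2, a3, a4, a5, a6, (a6 - a7)] else [a1, a2, a3, a4, a5, a6, a7])"
| "reflP i l = l"

lemma len7: "length l = 7 \<Longrightarrow> l = [l!0, l!1, l!2, l!3, l!4, l!5, l!6]"
  by (rule nth_equalityI) (auto simp: numeral_eq_Suc less_Suc_eq)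

lemma bilL_P: "length a = 7 \<Longrightarrow> length b = 7 \<Longrightarrow> bilL a b = bilP a b"
  apply (subst (1 2) len7[of a], assumption)
  apply (subst (1 2) len7[of b], assumption)
  apply (simp add: bilL_def)
  done

lemma refl_P: assumes "i \<in> {1..7}" "length l = 7" shows "refl i (vec l) = vec (reflP i l)"
proof -
  obtain a1 a2 a3 a4 a5 a6 a7 where l: "l = [a1, a2, a3, a4, a5, a6, a7]"
    using len7[OF assms(2)] by blast
  have i: "i = 1 \<or> i = 2 \<or> i = 3 \<or> i = 4 \<or> i = 5 \<or> i = 6 \<or> i = 7" using assms(1) by auto
  show ?thesis
    unfolding refl_def simple_vec[OF assms(1)] bil_vec l
    using i by (auto simp: fun_eq_iff vec_def bilL_def simpleL_def nth_Cons' algebra_simps)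
qed

lemma len_chk: "\<forall>l\<in>set Rlist. length l = 7"
  by code_simp

lemma closure_chk: "\<forall>l\<in>set Rlist. \<forall>i\<in>set [1..<8]. reflP i l \<in> set Rlist"
  by code_simp

lemma simple_chk: "\<forall>i\<in>set [1..<8]. simpleL i \<in> set Rlist"
  by code_simp

lemma roots_sub: "\<beta> \<in> roots \<Longrightarrow> \<exists>l\<in>set Rlist. \<beta> = vec l"
proof (induction rule: roots.induct)
  case (simple i)
  then show ?case using simple_chk simple_vec by auto
next
  case (reflect \<beta> i)
  then obtain l where "l \<in> set Rlist" "\<beta> = vec l" by auto
  then show ?case using closure_chk refl_P[OF reflect(2)] reflect(2) len_chk by auto
qed

definition formVL :: "nat list \<Rightarrow> nat list \<Rightarrow> nat" where
  "formVL v w = sum_list (map (\<lambda>k. formF (v ! k) (w ! k)) [0..<3]) mod 2"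

definition agL :: "nat list \<Rightarrow> nat list \<Rightarrow> bool" where
  "agL v w \<longleftrightarrow> length (filter (\<lambda>k. v ! k = w ! k) [0..<3]) = 1"

definition mdegL :: "int list \<Rightarrow> nat" where
  "mdegL l = Max (set (filter (\<lambda>i. vec l i \<noteq> 0) [1..<8]))"

lemma formV_L: "formV v w = formVL v w"
  by (simp add: formV_def formVL_def numeral_3_eq_3 lessThan_Suc add_ac)

lemma ag_L: "agree_exactly_one v w = agL v w"
proof -
  have e: "{k. k < 3 \<and> v ! k = w ! k} = set (filter (\<lambda>k. v ! k = w ! k) [0..<3])" by auto
  have "card {k. k < 3 \<and> v ! k = w ! k} = length (filter (\<lambda>k. v ! k = w ! k) [0..<3])"
    unfolding e by (rule distinct_card) simp
  then show ?thesis unfolding agree_exactly_one_def agL_def by simp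
qed

lemma mdeg_L: "mdeg (vec l) = mdegL l"
proof -
  have "{i \<in> {1..7}. vec l i \<noteq> 0} = set (filter (\<lambda>i. vec l i \<noteq> 0) [1..<8])" by auto
  then show ?thesis unfolding mdeg_def mdegL_def by simp
qed

lemma pos_L: assumes "length l = 7" "\<forall>i. vec l i \<ge> 0" shows "list_all (\<lambda>x. 0 \<le> x) l"
proof -
  have "\<And>k. k < 7 \<Longrightarrow> 0 \<le> l ! k"
  proof -
    fix k :: nat assume "k < 7"
    then have "vec l (Suc k) = l ! k" by (simp add: vec_def)
    then show "0 \<le> l ! k" using assms(2) by metis
  qed
  then show ?thesis using assms(1) by (simp add: list_all_length)
qed

definition G1 :: "(int list \<times> nat list) list" where "G1 = [([1,0,0,0,0,0,0],[1,0,0])]"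
definition G3 :: "(int list \<times> nat list) list" where "G3 = [([0,0,1,0,0,0,0],[3,0,0]),
   ([0,1,0,0,0,0,0],[0,3,0]),
   ([1,0,1,0,0,0,0],[2,0,0])]"
definition G4 :: "(int list \<times> nat list) list" where "G4 = [([0,0,0,1,0,0,0],[1,1,1]),
   ([0,0,1,1,0,0,0],[2,1,1]),
   ([0,1,0,1,0,0,0],[1,2,1]),
   ([0,1,1,1,0,0,0],[2,2,1]),
   ([1,0,1,1,0,0,0],[3,1,1]),
   ([1,1,1,1,0,0,0],[3,2,1])]"
definition G5 :: "(int list \<times> nat list) list" where "G5 = [([0,0,0,0,1,0,0],[0,0,3]),
   ([0,0,0,1,1,0,0],[1,1,2]),
   ([0,0,1,1,1,0,0],[2,1,2]),
   ([0,1,0,1,1,0,0],[1,2,2]),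
   ([0,1,1,1,1,0,0],[2,2,2]),
   ([0,1,1,2,1,0,0],[3,3,3]),
   ([1,0,1,1,1,0,0],[3,1,2]),
   ([1,1,1,1,1,0,0],[3,2,2]),
   ([1,1,1,2,1,0,0],[2,3,3]),
   ([1,1,2,2,1,0,0],[1,3,3])]"
definition G6 :: "(int list \<times> nat list) list" where "G6 = [([0,0,0,0,0,1,0],[0,0,1]),
   ([0,0,0,0,1,1,0],[0,0,2]),
   ([0,0,0,1,1,1,0],[1,1,3]),
   ([0,0,1,1,1,1,0],[2,1,3]),
   ([0,1,0,1,1,1,0],[1,2,3]),
   ([0,1,1,1,1,1,0],[2,2,3]),
   ([0,1,1,2,1,1,0],[3,3,2]),
   ([0,1,1,2,2,1,0],[3,3,1]),
   ([1,0,1,1,1,1,0],[3,1,3]),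
   ([1,1,1,1,1,1,0],[3,2,3]),
   ([1,1,1,2,1,1,0],[2,3,2]),
   ([1,1,1,2,2,1,0],[2,3,1]),
   ([1,1,2,2,1,1,0],[1,3,2]),
   ([1,1,2,2,2,1,0],[1,3,1]),
   ([1,1,2,3,2,1,0],[0,2,0]),
   ([1,2,2,3,2,1,0],[0,1,0])]"
definition G7 :: "(int list \<times> nat list) list" where "G7 = [([0,0,0,0,0,0,1],[0,3,3]),
   ([0,0,0,0,0,1,1],[0,3,2]),
   ([0,0,0,0,1,1,1],[0,3,1]),
   ([0,0,0,1,1,1,1],[1,2,0]),
   ([0,0,1,1,1,1,1],[2,2,0]),
   ([0,1,0,1,1,1,1],[1,1,0]),
   ([0,1,1,1,1,1,1],[2,1,0]),
   ([0,1,1,2,1,1,1],[3,0,1]),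
   ([0,1,1,2,2,1,1],[3,0,2]),
   ([0,1,1,2,2,2,1],[3,0,3]),
   ([1,0,1,1,1,1,1],[3,2,0]),
   ([1,1,1,1,1,1,1],[3,1,0]),
   ([1,1,1,2,1,1,1],[2,0,1]),
   ([1,1,1,2,2,1,1],[2,0,2]),
   ([1,1,1,2,2,2,1],[2,0,3]),
   ([1,1,2,2,1,1,1],[1,0,1]),
   ([1,1,2,2,2,1,1],[1,0,2]),
   ([1,1,2,2,2,2,1],[1,0,3]),
   ([1,1,2,3,2,1,1],[0,1,3]),
   ([1,1,2,3,2,2,1],[0,1,2]),
   ([1,1,2,3,3,2,1],[0,1,1]),
   ([1,2,2,3,2,1,1],[0,2,3]),
   ([1,2,2,3,2,2,1],[0,2,2]),
   ([1,2,2,3,3,2,1],[0,2,1]),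
   ([1,2,2,4,3,2,1],[1,3,0]),
   ([1,2,3,4,3,2,1],[2,3,0]),
   ([2,2,3,4,3,2,1],[3,3,0])]"

definition Gp :: "nat \<Rightarrow> (int list \<times> nat list) list" where
  "Gp m = (if m = 1 then G1 else if m = 2 \<or> m = 3 then G3 else if m = 4 then G4
     else if m = 5 then G5 else if m = 6 then G6 else G7)"

lemma group_chk: "\<forall>l\<in>set Rlist. list_all (\<lambda>x. 0 \<le> x) l \<longrightarrow> (l, fmap (vec l)) \<in> set (Gp (mdegL l))"
  by code_simp

definition Qp :: "(int list \<times> nat list) list \<Rightarrow> bool" where
  "Qp G = (\<forall>(l, fv)\<in>set G. \<forall>(l', fv')\<in>set G. l \<noteq> l' \<longrightarrow>
     (formVL fv fv' = 0 \<longleftrightarrow> agL fv fv') \<and> (bilP l l' = 0 \<longleftrightarrow> agL fv fv'))"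

lemma q1: "Qp G1" by code_simp
lemma q3: "Qp G3" by code_simp
lemma q4: "Qp G4" by code_simp
lemma q5: "Qp G5" by code_simp
lemma q6: "Qp G6" by code_simp
lemma q7: "Qp G7" by code_simp

lemma qall: "Qp (Gp m)"
  unfolding Gp_def using q1 q3 q4 q5 q6 q7 by auto

lemma pos_root_L: assumes "\<beta> \<in> pos_roots"
  obtains l where "l \<in> set Rlist" "\<beta> = vec l" "(l, fmap (vec l)) \<in> set (Gp (mdeg \<beta>))"
proof -
  from assms obtain l where l: "l \<in> set Rlist" "\<beta> = vec l" using roots_sub pos_roots_def by auto
  then have "list_all (\<lambda>x. 0 \<le> x) l" using pos_L len_chk assms pos_roots_def by auto
  then have "(l, fmap (vec l)) \<in> set (Gp (mdeg \<beta>))" using group_chk l mdeg_L by auto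
  then show ?thesis using that l by blast
qed

theorem mainTheorem7:
  fixes s :: nat and \<beta> \<beta>' :: "nat \<Rightarrow> int"
  assumes "s \<in> {1, 3, 4, 5, 6, 7}"
    and "\<beta> \<in> stratum s" and "\<beta>' \<in> stratum s" and "\<beta> \<noteq> \<beta>'"
  shows "(formV (fmap \<beta>) (fmap \<beta>') = 0 \<longleftrightarrow> agree_exactly_one (fmap \<beta>) (fmap \<beta>'))
       \<and> (bil \<beta> \<beta>' = 0 \<longleftrightarrow> agree_exactly_one (fmap \<beta>) (fmap \<beta>'))"
proof -
  have s1: "s \<noteq> 1" using assms(2,3,4) by (auto simp: stratum_def)
  then have p: "\<beta> \<in> pos_roots" "\<beta>' \<in> pos_roots" using assms(2,3) by (auto simp: stratum_def split: if_splits)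
  have md: "Gp (mdeg \<beta>) = Gp (mdeg \<beta>')"
    using assms(2,3) s1 by (auto simp: stratum_def Gp_def split: if_splits)
  obtain l where l: "l \<in> set Rlist" "\<beta> = vec l" "(l, fmap (vec l)) \<in> set (Gp (mdeg \<beta>))"
    using pos_root_L p(1) by blast
  obtain l' where l': "l' \<in> set Rlist" "\<beta>' = vec l'" "(l', fmap (vec l')) \<in> set (Gp (mdeg \<beta>))"
    using pos_root_L[OF p(2)] md by metis
  have "l \<noteq> l'" using assms(4) l l' by auto
  moreover have "bil \<beta> \<beta>' = bilP l l'" using l l' len_chk bil_vec bilL_P by auto
  ultimately show ?thesis using qall[of "mdeg \<beta>"] l l' unfolding Qp_def
    by (auto simp: formV_L ag_L)
qed

end
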